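(* Let $d\in\mathbb{N}$. There exists a constant $\Gamma=\Gamma(d)>0$ such that the following holds. Let $n,m\in\mathbb{N}$ with $n\geq 2$ and $C,q\in\mathbb{R}$ with $$\frac{n}{2(\log n)^{q}}\leq m\leq\frac{2n}{(\log n)^{q}},\qquad C\geq 1+\frac{2^{d+7}}{\log n},$$ and with $q\geq 1$ if $\frac{C^{1/d}n}{m}\notin\mathbb{Z}$, and $q>0$ if $\frac{C^{1/d}n}{m}\in\mathbb{Z}$. Then a uniformly random set $S\in\binom{\{1,\ldots,\lfloor C^{1/d}n\rfloor\}^{d}}{n^{d}}$ satisfies $$\mathbb{P}\left[\exists T\in\mathcal{T}_{m}\text{ such that }|S\cap(C^{1/d}n\cdot T)|\leq\frac{(1-\frac{\Gamma}{\log n})n^{d}}{m^{d}}\right]\leq \Gamma n^{\Gamma}\,2^{-\frac{(\log n)^{qd-2}}{\Gamma}}$$ and $$\mathbb{P}\left[\exists T\in\mathcal{T}_{m}\text{ such that }|S\cap(C^{1/d}n\cdot T)|\geq\frac{(1+\frac{\Gamma}{\log n})n^{d}}{m^{d}}\right]\leq \Gamma n^{\Gamma}\,2^{-\frac{(\log n)^{qd-2}}{\Gamma}}.$$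
   Context: $\log$ denotes the logarithm to base $2$. For $k\in\mathbb{N}$, $\mathcal{T}_{k}=\left\{\prod_{i=1}^{d}\left(\frac{p_{i}}{k},\frac{p_{i}+1}{k}\right]\colon p_{1},\ldots,p_{d}\in\{0,1,\ldots,k-1\}\right\}$, and $\lambda\cdot T=\{\lambda x\colon x\in T\}$. $\binom{A}{k}$ denotes the set of $k$-element subsets of $A$, with the uniform probability measure. *)

theory Defs
  imports "HOL-Probability.Probability"
begin

text \<open>Points of R^d (resp. Z^d) are represented as lists of length d.\<close>

definition grid :: "nat \<Rightarrow> nat \<Rightarrow> nat list set" where
  "grid N d = {x. length x = d \<and> (\<forall>i<d. x ! i \<in> {1..N})}"

definition tiles :: "nat \<Rightarrow> nat \<Rightarrow> real list set set" where
  "tiles k d = {{y. length y = d \<and> (\<forall>i<d. real (p ! i) / real k < y ! i \<and>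
                     y ! i \<le> (real (p ! i) + 1) / real k)}
               | p. length p = d \<and> (\<forall>i<d. p ! i < k)}"

definition scale_set :: "real \<Rightarrow> real list set \<Rightarrow> real list set" where
  "scale_set l T = (map (\<lambda>t. l * t)) ` T"

definition uniform_subsets :: "'a set \<Rightarrow> nat \<Rightarrow> 'a set pmf" where
  "uniform_subsets A k = pmf_of_set {S. S \<subseteq> A \<and> card S = k}"

end

theory Submission
  imports Defs
begin

lemma sum_Pow_binom:
  fixes x y :: real
  assumes "finite B"
  shows "(\<Sum>J\<in>Pow B. x ^ card J * y ^ (card B - card J)) = (x + y) ^ card B"
proof -
  have "(x + y) ^ card B = (\<Prod>i\<in>B. x + y)" by simp
  also have "\<dots> = (\<Sum>J\<in>Pow B. (\<Prod>i\<in>J. x) * (\<Prod>i\<in>B - J. y))"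
    by (rule prod_add[OF assms])
  also have "\<dots> = (\<Sum>J\<in>Pow B. x ^ card J * y ^ (card B - card J))"
    by (rule sum.cong) (auto simp: card_Diff_subset finite_subset[OF _ assms])
  finally show ?thesis by simp
qed

lemma count_disj:
  assumes "finite G" "J \<subseteq> G"
  shows "card {S. S \<subseteq> G \<and> card S = s \<and> J \<inter> S = {}} = (card G - card J) choose s"
proof -
  have "{S. S \<subseteq> G \<and> card S = s \<and> J \<inter> S = {}} = {S. S \<subseteq> G - J \<and> card S = s}" by auto
  moreover have "card (G - J) = card G - card J"
    using assms by (simp add: card_Diff_subset finite_subset)
  ultimately show ?thesis using n_subsets[of "G - J" s] assms by simp
qed

lemma count_sup:
  assumes "finite G" "J \<subseteq> G" "card J \<le> s"
  shows "card {S. S \<subseteq> G \<and> card S = s \<and> J \<subseteq> S} = (card G - card J) choose (s - card J)"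
proof -
  have fJ: "finite J" using assms finite_subset by blast
  have eq: "{S. S \<subseteq> G \<and> card S = s \<and> J \<subseteq> S} = (\<lambda>B. B \<union> J) ` {B. B \<subseteq> G - J \<and> card B = s - card J}"
  proof (rule set_eqI, rule iffI)
    fix S assume S: "S \<in> {S. S \<subseteq> G \<and> card S = s \<and> J \<subseteq> S}"
    then have "S = (S - J) \<union> J" by auto
    moreover have "card (S - J) = s - card J" using S fJ by (simp add: card_Diff_subset)
    ultimately show "S \<in> (\<lambda>B. B \<union> J) ` {B. B \<subseteq> G - J \<and> card B = s - card J}"
      using S by blast
  next
    fix S assume "S \<in> (\<lambda>B. B \<union> J) ` {B. B \<subseteq> G - J \<and> card B = s - card J}"
    then obtain B where B: "B \<subseteq> G - J" "card B = s - card J" "S = B \<union> J" by blast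
    have "finite B" using B assms finite_subset by blast
    have "B \<inter> J = {}" using B by blast
    then have "card S = card B + card J" using B fJ \<open>finite B\<close> by (simp add: card_Un_disjoint)
    then have "card S = s" using B assms(3) by simp
    then show "S \<in> {S. S \<subseteq> G \<and> card S = s \<and> J \<subseteq> S}" using B assms by auto
  qed
  have inj: "inj_on (\<lambda>B. B \<union> J) {B. B \<subseteq> G - J \<and> card B = s - card J}"
    by (rule inj_onI) blast
  have "card (G - J) = card G - card J"
    using assms by (simp add: card_Diff_subset finite_subset)
  then show ?thesis unfolding eq card_image[OF inj] using n_subsets[of "G - J"] assms by simp
qed

lemma binom_sup_bound:
  assumes "k \<le> s" "s \<le> M" "0 < M"
  shows "real ((M - k) choose (s - k)) \<le> (real s / real M) ^ k * real (M choose s)"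
  using assms(1)
proof (induction k)
  case 0 then show ?case by simp
next
  case (Suc k)
  then have IH: "real ((M - k) choose (s - k)) \<le> (real s / real M) ^ k * real (M choose s)" by simp
  have e: "real (s - k) * real ((M - k) choose (s - k)) = real (M - k) * real ((M - Suc k) choose (s - Suc k))"
  proof -
    have "Suc (s - Suc k) = s - k" using Suc by simp
    then have "(s - k) * ((M - k) choose (s - k)) = (M - k) * ((M - k - 1) choose (s - Suc k))"
      using binomial_absorption[of "s - Suc k" "M - k"] by simp
    then show ?thesis by (metis diff_Suc_eq_diff_pred diff_commute of_nat_mult) 
  qed
  have Mk: "real (M - k) > 0" using Suc assms by simp
  have "real ((M - Suc k) choose (s - Suc k)) = real (s - k) / real (M - k) * real ((M - k) choose (s - k))"
    using e Mk by (simp add: field_simps)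
  also have "\<dots> \<le> real s / real M * real ((M - k) choose (s - k))"
  proof (rule mult_right_mono)
    have "real (s - k) * real M \<le> real s * real (M - k)"
    proof -
      have "real k * real s \<le> real M * real k" using assms(2) by (metis mult.commute mult_left_mono of_nat_0_le_iff of_nat_le_iff)
      moreover have "real (s - k) = real s - real k" "real (M - k) = real M - real k"
        using Suc assms by (simp_all add: of_nat_diff)
      ultimately show ?thesis by (simp add: algebra_simps)
    qed
    then show "real (s - k) / real (M - k) \<le> real s / real M"
      using Mk assms by (simp add: field_simps)
  qed simp
  also have "\<dots> \<le> real s / real M * ((real s / real M) ^ k * real (M choose s))"
    by (rule mult_left_mono[OF IH]) simp
  finally show ?case by (simp only: power_Suc mult.assoc)
qed

lemma binom_disj_bound:
  assumes "s \<le> M" "0 < M" "k \<le> M"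
  shows "real ((M - k) choose s) \<le> ((real M - real s) / real M) ^ k * real (M choose s)"
  using assms(3)
proof (induction k)
  case 0 then show ?case by simp
next
  case (Suc k)
  show ?case
  proof (cases "s \<le> M - Suc k")
    case False
    then have z: "(M - Suc k) choose s = 0" by simp
    have "(real M - real s) / real M \<ge> 0" using assms by simp
    then have "0 \<le> ((real M - real s) / real M) ^ Suc k * real (M choose s)"
      by (intro mult_nonneg_nonneg zero_le_power) auto
    then show ?thesis unfolding z by simp
  next
    case True
    have mk: "M - k - 1 = M - Suc k" by simp
    have e0: "(M - k - s) * ((M - k) choose s) = (M - k) * ((M - Suc k) choose s)"
      using binomial_absorb_comp[of "M - k" s] unfolding mk .
    have e: "real (M - k - s) * real ((M - k) choose s) = real (M - k) * real ((M - Suc k) choose s)"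
      using arg_cong[OF e0, of real] by (simp only: of_nat_mult)
    have Mk: "real (M - k) > 0" using Suc.prems by simp
    have "real ((M - Suc k) choose s) = real (M - k - s) / real (M - k) * real ((M - k) choose s)"
      using e Mk by (simp add: field_simps)
    also have "\<dots> \<le> (real M - real s) / real M * real ((M - k) choose s)"
    proof (rule mult_right_mono)
      have ks: "k + s \<le> M" using True Suc.prems by linarith
      have r1: "real (M - k - s) = real M - real k - real s" using ks by (simp add: of_nat_diff)
      have r2: "real (M - k) = real M - real k" using ks by (simp add: of_nat_diff)
      have r3: "(real M - real k - real s) * real M = (real M - real s) * (real M - real k) - real s * real k"
        by (simp add: algebra_simps)
      have "real (M - k - s) * real M \<le> (real M - real s) * real (M - k)"
        unfolding r1 r2 r3 by simp
      then show "real (M - k - s) / real (M - k) \<le> (real M - real s) / real M"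
        using Mk assms by (simp add: field_simps)
    qed simp
    also have "\<dots> \<le> (real M - real s) / real M * (((real M - real s) / real M) ^ k * real (M choose s))"
      by (rule mult_left_mono[OF Suc.IH]) (use assms Suc.prems in simp_all)
    finally show ?thesis by (simp only: power_Suc mult.assoc)
  qed
qed

lemma mgf_upper:
  fixes t :: real
  assumes G: "finite G" and A: "A \<subseteq> G" and s: "s \<le> card G" and M: "0 < card G" and t: "t \<ge> 0"
  shows "(\<Sum>S\<in>{S. S \<subseteq> G \<and> card S = s}. (1 + t) ^ card (S \<inter> A))
           \<le> real (card G choose s) * (1 + t * real s / real (card G)) ^ card A"
proof -
  define \<Omega> where "\<Omega> = {S. S \<subseteq> G \<and> card S = s}"
  have fA: "finite A" using A G finite_subset by blast
  have fO: "finite \<Omega>" unfolding \<Omega>_def using G by simp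
  have "(\<Sum>S\<in>\<Omega>. (1 + t) ^ card (S \<inter> A)) = (\<Sum>S\<in>\<Omega>. \<Sum>J\<in>{J. J \<in> Pow A \<and> J \<subseteq> S}. t ^ card J)"
  proof (rule sum.cong)
    fix S assume "S \<in> \<Omega>"
    have "finite (S \<inter> A)" using fA by simp
    then have "(1 + t) ^ card (S \<inter> A) = (\<Sum>J\<in>Pow (S \<inter> A). t ^ card J * 1 ^ (card (S \<inter> A) - card J))"
      using sum_Pow_binom[of "S \<inter> A" t 1] by (simp add: add.commute)
    moreover have "Pow (S \<inter> A) = {J. J \<in> Pow A \<and> J \<subseteq> S}" by auto
    ultimately show "(1 + t) ^ card (S \<inter> A) = (\<Sum>J\<in>{J. J \<in> Pow A \<and> J \<subseteq> S}. t ^ card J)" by simp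
  qed simp
  also have "\<dots> = (\<Sum>J\<in>Pow A. \<Sum>S\<in>{S. S \<in> \<Omega> \<and> J \<subseteq> S}. t ^ card J)"
    by (rule sum.swap_restrict[OF fO]) (simp add: fA)
  also have "\<dots> = (\<Sum>J\<in>Pow A. t ^ card J * real (card {S. S \<subseteq> G \<and> card S = s \<and> J \<subseteq> S}))"
    by (rule sum.cong) (auto simp: \<Omega>_def conj_assoc)
  also have "\<dots> \<le> (\<Sum>J\<in>Pow A. t ^ card J * ((real s / real (card G)) ^ card J * real (card G choose s)))"
  proof (rule sum_mono)
    fix J assume J: "J \<in> Pow A"
    then have JG: "J \<subseteq> G" using A by auto
    have "real (card {S. S \<subseteq> G \<and> card S = s \<and> J \<subseteq> S}) \<le> (real s / real (card G)) ^ card J * real (card G choose s)"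
    proof (cases "card J \<le> s")
      case True
      then show ?thesis using count_sup[OF G JG True] binom_sup_bound[OF True s M] by simp
    next
      case False
      have "{S. S \<subseteq> G \<and> card S = s \<and> J \<subseteq> S} = {}"
      proof (rule ccontr)
        assume "{S. S \<subseteq> G \<and> card S = s \<and> J \<subseteq> S} \<noteq> {}"
        then obtain S where "S \<subseteq> G" "card S = s" "J \<subseteq> S" by blast
        then have "card J \<le> s" using G by (metis card_mono finite_subset)
        then show False using False by simp
      qed
      then show ?thesis by (simp del: Collect_empty_eq)
    qed
    then show "t ^ card J * real (card {S. S \<subseteq> G \<and> card S = s \<and> J \<subseteq> S})
        \<le> t ^ card J * ((real s / real (card G)) ^ card J * real (card G choose s))"
      by (rule mult_left_mono) (simp add: t)
  qed
  also have "\<dots> = real (card G choose s) * (\<Sum>J\<in>Pow A. (t * (real s / real (card G))) ^ card J * 1 ^ (card A - card J))"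
    unfolding sum_distrib_left by (intro sum.cong refl) (simp only: power_mult_distrib mult_ac power_one mult_1_right)
  also have "\<dots> = real (card G choose s) * (1 + t * real s / real (card G)) ^ card A"
    using sum_Pow_binom[OF fA, of "t * (real s / real (card G))" 1] by (simp add: add.commute)
  finally show ?thesis unfolding \<Omega>_def .
qed

lemma mgf_lower:
  fixes t :: real
  assumes G: "finite G" and A: "A \<subseteq> G" and s: "s \<le> card G" and M: "0 < card G" and t: "0 \<le> t" "t \<le> 1"
  shows "(\<Sum>S\<in>{S. S \<subseteq> G \<and> card S = s}. (1 - t) ^ card (S \<inter> A))
           \<le> real (card G choose s) * (1 - t * real s / real (card G)) ^ card A"
proof -
  define \<Omega> where "\<Omega> = {S. S \<subseteq> G \<and> card S = s}"
  have fA: "finite A" using A G finite_subset by blast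
  have fO: "finite \<Omega>" unfolding \<Omega>_def using G by simp
  have "(\<Sum>S\<in>\<Omega>. (1 - t) ^ card (S \<inter> A)) = (\<Sum>S\<in>\<Omega>. \<Sum>J\<in>{J. J \<in> Pow A \<and> J \<inter> S = {}}. t ^ card J * (1 - t) ^ (card A - card J))"
  proof (rule sum.cong)
    fix S assume "S \<in> \<Omega>"
    have f1: "finite (A - S)" using fA by simp
    have cA: "card A = card (S \<inter> A) + card (A - S)"
      using fA by (metis Int_commute card_Int_Diff)
    have "(1 - t) ^ card (S \<inter> A) = (1 - t) ^ card (S \<inter> A) * (t + (1 - t)) ^ card (A - S)" by simp
    also have "\<dots> = (1 - t) ^ card (S \<inter> A) * (\<Sum>J\<in>Pow (A - S). t ^ card J * (1 - t) ^ (card (A - S) - card J))"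
      using sum_Pow_binom[OF f1, of t "1 - t"] by simp
    also have "\<dots> = (\<Sum>J\<in>Pow (A - S). t ^ card J * (1 - t) ^ (card A - card J))"
      unfolding sum_distrib_left
    proof (rule sum.cong)
      fix J assume "J \<in> Pow (A - S)"
      then have "card J \<le> card (A - S)" using f1 by (simp add: card_mono)
      then have "card A - card J = card (S \<inter> A) + (card (A - S) - card J)" using cA by simp
      then show "(1 - t) ^ card (S \<inter> A) * (t ^ card J * (1 - t) ^ (card (A - S) - card J)) =
          t ^ card J * (1 - t) ^ (card A - card J)" by (simp add: power_add)
    qed simp
    finally have eq1: "(1 - t) ^ card (S \<inter> A) = (\<Sum>J\<in>Pow (A - S). t ^ card J * (1 - t) ^ (card A - card J))" .
    have pe: "Pow (A - S) = {J. J \<in> Pow A \<and> J \<inter> S = {}}" by auto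
    show "(1 - t) ^ card (S \<inter> A) = (\<Sum>J\<in>{J. J \<in> Pow A \<and> J \<inter> S = {}}. t ^ card J * (1 - t) ^ (card A - card J))"
      unfolding eq1 pe by (rule refl)
  qed simp
  also have "\<dots> = (\<Sum>J\<in>Pow A. \<Sum>S\<in>{S. S \<in> \<Omega> \<and> J \<inter> S = {}}. t ^ card J * (1 - t) ^ (card A - card J))"
    by (rule sum.swap_restrict[OF fO]) (simp add: fA)
  also have "\<dots> = (\<Sum>J\<in>Pow A. t ^ card J * (1 - t) ^ (card A - card J) * real (card {S. S \<subseteq> G \<and> card S = s \<and> J \<inter> S = {}}))"
    by (rule sum.cong) (auto simp: \<Omega>_def conj_assoc)
  also have "\<dots> \<le> (\<Sum>J\<in>Pow A. t ^ card J * (1 - t) ^ (card A - card J) * (((real (card G) - real s) / real (card G)) ^ card J * real (card G choose s)))"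
  proof (rule sum_mono)
    fix J assume J: "J \<in> Pow A"
    then have JG: "J \<subseteq> G" using A by auto
    have "real (card {S. S \<subseteq> G \<and> card S = s \<and> J \<inter> S = {}}) \<le> ((real (card G) - real s) / real (card G)) ^ card J * real (card G choose s)"
    proof -
      have "card J \<le> card G" using JG G by (simp add: card_mono)
      then show ?thesis using count_disj[OF G JG] binom_disj_bound[OF s M] by simp
    qed
    then show "t ^ card J * (1 - t) ^ (card A - card J) * real (card {S. S \<subseteq> G \<and> card S = s \<and> J \<inter> S = {}})
        \<le> t ^ card J * (1 - t) ^ (card A - card J) * (((real (card G) - real s) / real (card G)) ^ card J * real (card G choose s))"
      by (rule mult_left_mono) (simp add: t)
  qed
  also have "\<dots> = real (card G choose s) * (\<Sum>J\<in>Pow A. (t * ((real (card G) - real s) / real (card G))) ^ card J * (1 - t) ^ (card A - card J))"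
    unfolding sum_distrib_left by (intro sum.cong refl) (simp only: power_mult_distrib mult_ac power_one mult_1_right)
  also have "\<dots> = real (card G choose s) * (t * ((real (card G) - real s) / real (card G)) + (1 - t)) ^ card A"
    using sum_Pow_binom[OF fA, of "t * ((real (card G) - real s) / real (card G))" "1 - t"] by simp
  also have "t * ((real (card G) - real s) / real (card G)) + (1 - t) = 1 - t * real s / real (card G)"
    using M by (simp add: field_simps)
  finally show ?thesis unfolding \<Omega>_def .
qed


lemma pow_exp_ln: "0 < b \<Longrightarrow> (b::real) ^ c = exp (real c * ln b)"
  by (simp add: exp_of_nat_mult)

lemma tail_upper:
  fixes t x :: real
  assumes G: "finite G" and A: "A \<subseteq> G" and s: "s \<le> card G" and M: "0 < card G" and t: "t \<ge> 0" and x: "x \<ge> 0"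
  shows "real (card {S\<in>{S. S \<subseteq> G \<and> card S = s}. x \<le> real (card (S \<inter> A))})
     \<le> real (card {S. S \<subseteq> G \<and> card S = s}) * exp (t * real s / real (card G) * real (card A) - x * ln (1 + t))"
proof -
  define \<Omega> where "\<Omega> = {S. S \<subseteq> G \<and> card S = s}"
  define E where "E = {S\<in>\<Omega>. x \<le> real (card (S \<inter> A))}"
  have fO: "finite \<Omega>" unfolding \<Omega>_def using G by simp
  have cO: "card \<Omega> = card G choose s" unfolding \<Omega>_def using n_subsets[OF G] by simp
  have "real (card E) * exp (x * ln (1 + t)) = (\<Sum>S\<in>E. exp (x * ln (1 + t)))" by simp
  also have "\<dots> \<le> (\<Sum>S\<in>E. (1 + t) ^ card (S \<inter> A))"
  proof (rule sum_mono)
    fix S assume "S \<in> E"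
    then have "x \<le> real (card (S \<inter> A))" unfolding E_def by simp
    moreover have "ln (1 + t) \<ge> 0" using t by simp
    ultimately have "x * ln (1 + t) \<le> real (card (S \<inter> A)) * ln (1 + t)" by (rule mult_right_mono)
    then show "exp (x * ln (1 + t)) \<le> (1 + t) ^ card (S \<inter> A)"
      using pow_exp_ln[of "1 + t" "card (S \<inter> A)"] t by simp
  qed
  also have "\<dots> \<le> (\<Sum>S\<in>\<Omega>. (1 + t) ^ card (S \<inter> A))"
    by (rule sum_mono2[OF fO]) (use t in \<open>auto simp: E_def\<close>)
  also have "\<dots> \<le> real (card G choose s) * (1 + t * real s / real (card G)) ^ card A"
    unfolding \<Omega>_def by (rule mgf_upper[OF G A s M t])
  also have "\<dots> \<le> real (card G choose s) * exp (t * real s / real (card G)) ^ card A"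
    by (intro mult_left_mono power_mono) (use t in auto)
  also have "\<dots> = real (card \<Omega>) * exp (t * real s / real (card G) * real (card A))"
    by (simp add: cO exp_of_nat_mult[symmetric] mult.commute)
  finally have "real (card E) * exp (x * ln (1 + t)) \<le> real (card \<Omega>) * exp (t * real s / real (card G) * real (card A))" .
  then have "real (card E) \<le> real (card \<Omega>) * exp (t * real s / real (card G) * real (card A)) / exp (x * ln (1 + t))"
    by (simp add: field_simps)
  also have "\<dots> = real (card \<Omega>) * exp (t * real s / real (card G) * real (card A) - x * ln (1 + t))"
    by (simp add: exp_diff)
  finally show ?thesis unfolding E_def \<Omega>_def .
qed

lemma tail_lower:
  fixes t x :: real
  assumes G: "finite G" and A: "A \<subseteq> G" and s: "s \<le> card G" and M: "0 < card G" and t: "t \<ge> 0" "t < 1" and x: "x \<ge> 0"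
  shows "real (card {S\<in>{S. S \<subseteq> G \<and> card S = s}. real (card (S \<inter> A)) \<le> x})
     \<le> real (card {S. S \<subseteq> G \<and> card S = s}) * exp (- (t * real s / real (card G) * real (card A)) - x * ln (1 - t))"
proof -
  define \<Omega> where "\<Omega> = {S. S \<subseteq> G \<and> card S = s}"
  define E where "E = {S\<in>\<Omega>. real (card (S \<inter> A)) \<le> x}"
  have fO: "finite \<Omega>" unfolding \<Omega>_def using G by simp
  have cO: "card \<Omega> = card G choose s" unfolding \<Omega>_def using n_subsets[OF G] by simp
  have "real (card E) * exp (x * ln (1 - t)) = (\<Sum>S\<in>E. exp (x * ln (1 - t)))" by simp
  also have "\<dots> \<le> (\<Sum>S\<in>E. (1 - t) ^ card (S \<inter> A))"
  proof (rule sum_mono)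
    fix S assume "S \<in> E"
    then have "real (card (S \<inter> A)) \<le> x" unfolding E_def by simp
    moreover have "ln (1 - t) \<le> 0" using t by simp
    ultimately have "x * ln (1 - t) \<le> real (card (S \<inter> A)) * ln (1 - t)" by (rule mult_right_mono_neg)
    then show "exp (x * ln (1 - t)) \<le> (1 - t) ^ card (S \<inter> A)"
      using pow_exp_ln[of "1 - t" "card (S \<inter> A)"] t by simp
  qed
  also have "\<dots> \<le> (\<Sum>S\<in>\<Omega>. (1 - t) ^ card (S \<inter> A))"
    by (rule sum_mono2[OF fO]) (use t in \<open>auto simp: E_def\<close>)
  also have "\<dots> \<le> real (card G choose s) * (1 - t * real s / real (card G)) ^ card A"
    unfolding \<Omega>_def by (rule mgf_lower[OF G A s M]) (use t in auto)
  also have "\<dots> \<le> real (card G choose s) * exp (- (t * real s / real (card G))) ^ card A"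
  proof (intro mult_left_mono power_mono)
    have "real s / real (card G) \<le> 1" using s M by simp
    then have "t * real s / real (card G) \<le> 1" using t
      by (metis less_eq_real_def mult_le_one of_nat_0_le_iff times_divide_eq_right zero_le_divide_iff)
    then show "0 \<le> 1 - t * real s / real (card G)" by simp
    show "1 - t * real s / real (card G) \<le> exp (- (t * real s / real (card G)))"
      using exp_ge_add_one_self[of "- (t * real s / real (card G))"] by simp
  qed simp
  also have "\<dots> = real (card \<Omega>) * exp (- (t * real s / real (card G) * real (card A)))"
    by (simp add: cO exp_of_nat_mult[symmetric] mult.commute)
  finally have "real (card E) * exp (x * ln (1 - t)) \<le> real (card \<Omega>) * exp (- (t * real s / real (card G) * real (card A)))" .
  then have "real (card E) \<le> real (card \<Omega>) * exp (- (t * real s / real (card G) * real (card A))) / exp (x * ln (1 - t))"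
    by (simp add: field_simps)
  also have "\<dots> = real (card \<Omega>) * exp (- (t * real s / real (card G) * real (card A)) - x * ln (1 - t))"
    by (simp add: exp_diff)
  finally show ?thesis unfolding E_def \<Omega>_def .
qed


lemma tile_upper:
  fixes \<mu>0 \<delta> \<epsilon> :: real
  assumes G: "finite G" and A: "A \<subseteq> G" and s: "s \<le> card G" and M: "0 < card G"
    and mu0: "\<mu>0 > 0" and d: "0 < \<delta>" "\<delta> \<le> 1" and e: "\<epsilon> \<le> \<delta> / 2"
    and mu: "real s / real (card G) * real (card A) \<le> (1 + \<epsilon>) * \<mu>0"
  shows "real (card {S\<in>{S. S \<subseteq> G \<and> card S = s}. (1 + \<delta>) * \<mu>0 \<le> real (card (S \<inter> A))})
     \<le> real (card {S. S \<subseteq> G \<and> card S = s}) * exp (- (\<mu>0 * \<delta>\<^sup>2 / 32))"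
proof -
  define t where "t = \<delta> / 8"
  define x where "x = (1 + \<delta>) * \<mu>0"
  define \<mu> where "\<mu> = real s / real (card G) * real (card A)"
  have t0: "0 \<le> t" "t \<le> 1" using d by (auto simp: t_def)
  have x0: "0 \<le> x" using d mu0 by (simp add: x_def)
  have ln: "t - t\<^sup>2 \<le> ln (1 + t)" by (rule ln_one_plus_pos_lower_bound[OF t0])
  have "t * \<mu> \<le> t * ((1 + \<epsilon>) * \<mu>0)" unfolding \<mu>_def by (rule mult_left_mono[OF mu t0(1)])
  moreover have "x * (t - t\<^sup>2) \<le> x * ln (1 + t)" using ln x0 by (simp add: mult_left_mono)
  ultimately have "t * \<mu> - x * ln (1 + t) \<le> t * ((1 + \<epsilon>) * \<mu>0) - x * (t - t\<^sup>2)" by linarith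
  also have "\<dots> = \<mu>0 * (\<delta> / 8) * (\<epsilon> - \<delta> + \<delta> / 8 + \<delta>\<^sup>2 / 8)"
    by (simp add: t_def x_def power2_eq_square field_simps)
  also have "\<dots> \<le> \<mu>0 * (\<delta> / 8) * (- \<delta> / 4)"
  proof (rule mult_left_mono)
    have "\<delta>\<^sup>2 \<le> \<delta>" using d by (simp add: power2_eq_square mult_le_cancel_left1)
    then show "\<epsilon> - \<delta> + \<delta> / 8 + \<delta>\<^sup>2 / 8 \<le> - \<delta> / 4" using e by linarith
  qed (use mu0 d in simp)
  also have "\<dots> = - (\<mu>0 * \<delta>\<^sup>2 / 32)" by (simp add: power2_eq_square)
  finally have ex: "t * real s / real (card G) * real (card A) - x * ln (1 + t) \<le> - (\<mu>0 * \<delta>\<^sup>2 / 32)"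
    unfolding \<mu>_def by simp
  have "real (card {S\<in>{S. S \<subseteq> G \<and> card S = s}. x \<le> real (card (S \<inter> A))})
     \<le> real (card {S. S \<subseteq> G \<and> card S = s}) * exp (t * real s / real (card G) * real (card A) - x * ln (1 + t))"
    by (rule tail_upper[OF G A s M t0(1) x0])
  also have "\<dots> \<le> real (card {S. S \<subseteq> G \<and> card S = s}) * exp (- (\<mu>0 * \<delta>\<^sup>2 / 32))"
    using ex by (intro mult_left_mono) auto
  finally show ?thesis unfolding x_def .
qed

lemma tile_lower:
  fixes \<mu>0 \<delta> \<epsilon> :: real
  assumes G: "finite G" and A: "A \<subseteq> G" and s: "s \<le> card G" and M: "0 < card G"
    and mu0: "\<mu>0 > 0" and d: "0 < \<delta>" "\<delta> \<le> 1" and e: "\<epsilon> \<le> \<delta> / 2"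
    and mu: "(1 - \<epsilon>) * \<mu>0 \<le> real s / real (card G) * real (card A)"
  shows "real (card {S\<in>{S. S \<subseteq> G \<and> card S = s}. real (card (S \<inter> A)) \<le> (1 - \<delta>) * \<mu>0})
     \<le> real (card {S. S \<subseteq> G \<and> card S = s}) * exp (- (\<mu>0 * \<delta>\<^sup>2 / 32))"
proof -
  define t where "t = \<delta> / 8"
  define x where "x = (1 - \<delta>) * \<mu>0"
  define \<mu> where "\<mu> = real s / real (card G) * real (card A)"
  have t0: "0 \<le> t" "t \<le> 1/2" "t < 1" using d by (auto simp: t_def)
  have x0: "0 \<le> x" using d mu0 by (simp add: x_def)
  have ln: "- t - 2 * t\<^sup>2 \<le> ln (1 - t)" by (rule ln_one_minus_pos_lower_bound[OF t0(1,2)])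
  have "t * ((1 - \<epsilon>) * \<mu>0) \<le> t * \<mu>" unfolding \<mu>_def by (rule mult_left_mono[OF mu t0(1)])
  moreover have "x * (- t - 2 * t\<^sup>2) \<le> x * ln (1 - t)" using ln x0 by (simp add: mult_left_mono)
  ultimately have "- (t * \<mu>) - x * ln (1 - t) \<le> - (t * ((1 - \<epsilon>) * \<mu>0)) - x * (- t - 2 * t\<^sup>2)" by linarith
  also have "\<dots> = \<mu>0 * (\<delta> / 8) * (\<epsilon> - \<delta> + \<delta> / 4 - \<delta>\<^sup>2 / 4)"
    by (simp add: t_def x_def power2_eq_square field_simps)
  also have "\<dots> \<le> \<mu>0 * (\<delta> / 8) * (- \<delta> / 4)"
  proof (rule mult_left_mono)
    have "0 \<le> \<delta>\<^sup>2" by simp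
    then show "\<epsilon> - \<delta> + \<delta> / 4 - \<delta>\<^sup>2 / 4 \<le> - \<delta> / 4" using e by linarith
  qed (use mu0 d in simp)
  also have "\<dots> = - (\<mu>0 * \<delta>\<^sup>2 / 32)" by (simp add: power2_eq_square)
  finally have ex: "- (t * real s / real (card G) * real (card A)) - x * ln (1 - t) \<le> - (\<mu>0 * \<delta>\<^sup>2 / 32)"
    unfolding \<mu>_def by simp
  have "real (card {S\<in>{S. S \<subseteq> G \<and> card S = s}. real (card (S \<inter> A)) \<le> x})
     \<le> real (card {S. S \<subseteq> G \<and> card S = s}) * exp (- (t * real s / real (card G) * real (card A)) - x * ln (1 - t))"
    by (rule tail_lower[OF G A s M t0(1) t0(3) x0])
  also have "\<dots> \<le> real (card {S. S \<subseteq> G \<and> card S = s}) * exp (- (\<mu>0 * \<delta>\<^sup>2 / 32))"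
    using ex by (intro mult_left_mono) auto
  finally show ?thesis unfolding x_def .
qed

lemma card_lists_prod:
  assumes "\<And>i. finite (I i)"
  shows "card {x. length x = d \<and> (\<forall>i<d. x ! i \<in> I i)} = (\<Prod>i<d. card (I i))"
  using assms
proof (induction d arbitrary: I)
  case 0
  have "{x. length x = 0 \<and> (\<forall>i<0. x ! i \<in> I i)} = {[]}" by auto
  then show ?case by simp
next
  case (Suc d)
  have eq: "{x. length x = Suc d \<and> (\<forall>i<Suc d. x ! i \<in> I i)}
     = (\<lambda>(h, t). h # t) ` (I 0 \<times> {x. length x = d \<and> (\<forall>i<d. x ! i \<in> I (Suc i))})"
  proof (rule set_eqI, rule iffI)
    fix x assume x: "x \<in> {x. length x = Suc d \<and> (\<forall>i<Suc d. x ! i \<in> I i)}"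
    then obtain h t where ht: "x = h # t" by (cases x) auto
    then show "x \<in> (\<lambda>(h, t). h # t) ` (I 0 \<times> {x. length x = d \<and> (\<forall>i<d. x ! i \<in> I (Suc i))})"
      using x by (force simp: image_iff)
  next
    fix x assume "x \<in> (\<lambda>(h, t). h # t) ` (I 0 \<times> {x. length x = d \<and> (\<forall>i<d. x ! i \<in> I (Suc i))})"
    then show "x \<in> {x. length x = Suc d \<and> (\<forall>i<Suc d. x ! i \<in> I i)}"
      by (auto simp: less_Suc_eq_0_disj)
  qed
  have inj: "inj_on (\<lambda>(h, t). h # t) (I 0 \<times> {x. length x = d \<and> (\<forall>i<d. x ! i \<in> I (Suc i))})"
    by (rule inj_onI) auto
  have IH2: "card {x. length x = d \<and> (\<forall>i<d. x ! i \<in> I (Suc i))} = (\<Prod>i<d. card (I (Suc i)))"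
    using Suc.IH[of "\<lambda>i. I (Suc i)"] Suc.prems by simp
  show ?case unfolding eq card_image[OF inj] card_cartesian_product prod.lessThan_Suc_shift IH2 ..
qed

lemma count_interval:
  fixes u v :: real
  assumes "0 \<le> u" "u \<le> v"
  shows "real (card {k::nat. u < real k \<and> real k \<le> v}) = real_of_int \<lfloor>v\<rfloor> - real_of_int \<lfloor>u\<rfloor>"
proof -
  have eq: "{k::nat. u < real k \<and> real k \<le> v} = {nat \<lfloor>u\<rfloor> + 1 .. nat \<lfloor>v\<rfloor>}"
  proof (rule set_eqI)
    fix k :: nat
    have "u < real k \<longleftrightarrow> \<lfloor>u\<rfloor> < int k" by (simp add: floor_less_iff)
    moreover have "real k \<le> v \<longleftrightarrow> int k \<le> \<lfloor>v\<rfloor>" by (simp add: le_floor_iff)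
    ultimately show "k \<in> {k::nat. u < real k \<and> real k \<le> v} \<longleftrightarrow> k \<in> {nat \<lfloor>u\<rfloor> + 1 .. nat \<lfloor>v\<rfloor>}"
      using assms by auto
  qed
  have "0 \<le> \<lfloor>u\<rfloor>" using assms by simp
  moreover have "\<lfloor>u\<rfloor> \<le> \<lfloor>v\<rfloor>" using assms by (simp add: floor_mono)
  ultimately have "0 \<le> \<lfloor>v\<rfloor>" "nat \<lfloor>u\<rfloor> \<le> nat \<lfloor>v\<rfloor>" "0 \<le> \<lfloor>u\<rfloor>" by linarith+
  then show ?thesis unfolding eq by (simp add: of_nat_diff)
qed


lemma tile_count:
  fixes L :: real
  assumes L: "L > 0" and m: "m > 0" and p: "length p = d" "\<forall>i<d. p ! i < m"
  shows "{x\<in>grid (nat \<lfloor>L\<rfloor>) d. map real x \<in> scale_set L {y. length y = d \<and> (\<forall>i<d. real (p ! i) / real m < y ! i \<and> y ! i \<le> (real (p ! i) + 1) / real m)}}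
       = {x. length x = d \<and> (\<forall>i<d. x ! i \<in> {k::nat. L * real (p ! i) / real m < real k \<and> real k \<le> L * (real (p ! i) + 1) / real m})}"
proof (rule set_eqI, rule iffI)
  fix x
  assume "x \<in> {x\<in>grid (nat \<lfloor>L\<rfloor>) d. map real x \<in> scale_set L {y. length y = d \<and> (\<forall>i<d. real (p ! i) / real m < y ! i \<and> y ! i \<le> (real (p ! i) + 1) / real m)}}"
  then obtain y where x: "length x = d" and y: "length y = d" "\<forall>i<d. real (p ! i) / real m < y ! i \<and> y ! i \<le> (real (p ! i) + 1) / real m"
    and xy: "map real x = map (\<lambda>t. L * t) y"
    unfolding grid_def scale_set_def by auto
  have "x ! i \<in> {k::nat. L * real (p ! i) / real m < real k \<and> real k \<le> L * (real (p ! i) + 1) / real m}" if i: "i < d" for i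
  proof -
    have "real (x ! i) = L * y ! i"
      using arg_cong[OF xy, of "\<lambda>l. l ! i"] i x y by simp
    moreover have "L * (real (p ! i) / real m) < L * y ! i" using y i L by (intro mult_strict_left_mono) auto
    moreover have "L * y ! i \<le> L * ((real (p ! i) + 1) / real m)" using y i L by (intro mult_left_mono) auto
    ultimately show ?thesis by simp
  qed
  then show "x \<in> {x. length x = d \<and> (\<forall>i<d. x ! i \<in> {k::nat. L * real (p ! i) / real m < real k \<and> real k \<le> L * (real (p ! i) + 1) / real m})}"
    using x by simp
next
  fix x
  assume "x \<in> {x. length x = d \<and> (\<forall>i<d. x ! i \<in> {k::nat. L * real (p ! i) / real m < real k \<and> real k \<le> L * (real (p ! i) + 1) / real m})}"
  then have x: "length x = d" and xb: "\<And>i. i < d \<Longrightarrow> L * real (p ! i) / real m < real (x ! i) \<and> real (x ! i) \<le> L * (real (p ! i) + 1) / real m"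
    by auto
  define y where "y = map (\<lambda>k. real k / L) x"
  have "y \<in> {y. length y = d \<and> (\<forall>i<d. real (p ! i) / real m < y ! i \<and> y ! i \<le> (real (p ! i) + 1) / real m)}"
  proof -
    have "real (p ! i) / real m < y ! i \<and> y ! i \<le> (real (p ! i) + 1) / real m" if i: "i < d" for i
    proof -
      have yi: "y ! i = real (x ! i) / L" using i x by (simp add: y_def)
      have "L * (real (p ! i) / real m) < real (x ! i)" "real (x ! i) \<le> L * ((real (p ! i) + 1) / real m)"
        using xb[OF i] by auto
      then show ?thesis unfolding yi using L by (simp add: pos_less_divide_eq pos_divide_le_eq mult.commute)
    qed
    then show ?thesis using x by (simp add: y_def)
  qed
  moreover have "map real x = map (\<lambda>t. L * t) y" using L by (simp add: y_def)
  ultimately have "map real x \<in> scale_set L {y. length y = d \<and> (\<forall>i<d. real (p ! i) / real m < y ! i \<and> y ! i \<le> (real (p ! i) + 1) / real m)}"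
    unfolding scale_set_def by blast
  moreover have "x \<in> grid (nat \<lfloor>L\<rfloor>) d"
  proof -
    have "x ! i \<in> {1..nat \<lfloor>L\<rfloor>}" if i: "i < d" for i
    proof -
      have "0 \<le> L * real (p ! i) / real m" using L by simp
      then have "0 < real (x ! i)" using xb[OF i] by linarith
      then have 1: "1 \<le> x ! i" by simp
      have "p ! i < m" using p i by simp
      then have "p ! i + 1 \<le> m" by simp
      then have "real (p ! i + 1) \<le> real m" by (rule of_nat_mono)
      then have "real (p ! i) + 1 \<le> real m" by simp
      then have "(real (p ! i) + 1) / real m \<le> 1" using m by simp
      then have "L * ((real (p ! i) + 1) / real m) \<le> L * 1" by (rule mult_left_mono) (use L in simp)
      then have "L * ((real (p ! i) + 1) / real m) \<le> L" by simp
      then have "real (x ! i) \<le> L" using xb[OF i] by simp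
      then have "int (x ! i) \<le> \<lfloor>L\<rfloor>" by (simp add: le_floor_iff)
      then have "x ! i \<le> nat \<lfloor>L\<rfloor>" by simp
      with 1 show ?thesis by simp
    qed
    then show ?thesis using x unfolding grid_def by simp
  qed
  ultimately show "x \<in> {x\<in>grid (nat \<lfloor>L\<rfloor>) d. map real x \<in> scale_set L {y. length y = d \<and> (\<forall>i<d. real (p ! i) / real m < y ! i \<and> y ! i \<le> (real (p ! i) + 1) / real m)}}"
    by simp
qed

lemma tile_card_bounds:
  fixes L :: real
  assumes L: "L > 0" and m: "m > 0" and p: "length p = d" "\<forall>i<d. p ! i < m"
  defines "A \<equiv> {x\<in>grid (nat \<lfloor>L\<rfloor>) d. map real x \<in> scale_set L {y. length y = d \<and> (\<forall>i<d. real (p ! i) / real m < y ! i \<and> y ! i \<le> (real (p ! i) + 1) / real m)}}"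
  shows "real (card A) \<le> (L / real m + 1) ^ d"
    and "1 \<le> L / real m \<Longrightarrow> (L / real m - 1) ^ d \<le> real (card A)"
    and "L / real m \<in> \<int> \<Longrightarrow> real (card A) = (L / real m) ^ d"
proof -
  define I where "I i = {k::nat. L * real (p ! i) / real m < real k \<and> real k \<le> L * (real (p ! i) + 1) / real m}" for i
  have fin: "finite (I i)" for i
  proof -
    define v where "v = L * (real (p ! i) + 1) / real m"
    have "k \<le> nat \<lceil>v\<rceil>" if "real k \<le> v" for k :: nat
    proof -
      have "real k \<le> real_of_int \<lceil>v\<rceil>" using that le_of_int_ceiling[of v] by linarith
      then have "int k \<le> \<lceil>v\<rceil>" by linarith
      then show ?thesis by simp
    qed
    then have "I i \<subseteq> {..nat \<lceil>v\<rceil>}"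
      unfolding I_def v_def by auto
    then show ?thesis by (rule finite_subset) simp
  qed
  have "A = {x. length x = d \<and> (\<forall>i<d. x ! i \<in> I i)}"
    unfolding A_def I_def by (rule tile_count[OF L m p])
  then have cA: "real (card A) = (\<Prod>i<d. real (card (I i)))"
    using card_lists_prod[of I d, OF fin] by simp
  have ci: "real (card (I i)) = real_of_int \<lfloor>L * (real (p ! i) + 1) / real m\<rfloor> - real_of_int \<lfloor>L * real (p ! i) / real m\<rfloor>" for i
    unfolding I_def
  proof (rule count_interval)
    show "0 \<le> L * real (p ! i) / real m" using L by simp
    show "L * real (p ! i) / real m \<le> L * (real (p ! i) + 1) / real m"
      using L m by (simp add: divide_right_mono)
  qed
  have v: "L * (real (p ! i) + 1) / real m = L * real (p ! i) / real m + L / real m" for i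
    by (simp add: algebra_simps add_divide_distrib)
  have ub: "real (card (I i)) \<le> L / real m + 1" for i
    unfolding ci v using of_int_floor_le[of "L * real (p ! i) / real m + L / real m"]
      real_of_int_floor_gt_diff_one[of "L * real (p ! i) / real m"] by linarith
  have lb: "L / real m - 1 \<le> real (card (I i))" for i
    unfolding ci v using of_int_floor_le[of "L * real (p ! i) / real m"]
      real_of_int_floor_gt_diff_one[of "L * real (p ! i) / real m + L / real m"] by linarith
  show "real (card A) \<le> (L / real m + 1) ^ d"
    unfolding cA using prod_mono[of "{..<d}" "\<lambda>i. real (card (I i))" "\<lambda>i. L / real m + 1"] ub by simp
  show "(L / real m - 1) ^ d \<le> real (card A)" if "1 \<le> L / real m"
    unfolding cA using prod_mono[of "{..<d}" "\<lambda>i. L / real m - 1" "\<lambda>i. real (card (I i))"] lb that by simp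
  show "real (card A) = (L / real m) ^ d" if Lint: "L / real m \<in> \<int>"
  proof -
    obtain K where K: "L / real m = real_of_int K" by (rule Ints_cases[OF Lint])
    have "real (card (I i)) = L / real m" for i
    proof -
      have u: "L * real (p ! i) / real m = real_of_int (K * int (p ! i))"
        using K by (simp add: field_simps) (metis K mult.commute times_divide_eq_left)
      show ?thesis unfolding ci v u K by simp
    qed
    then show ?thesis unfolding cA by simp
  qed
qed

lemma ratio_upper:
  fixes L m \<Lambda> :: real and d :: nat
  assumes "\<Lambda> \<ge> 16 * real d" "d \<ge> 1" "m > 0" "m / L \<le> 2 / \<Lambda>" "1 / L \<le> 1 / \<Lambda>" "L > 0"
  shows "((L + m) / (L - 1)) ^ d \<le> 1 + 8 * real d / \<Lambda>"
proof -
  define e where "e = 1 / \<Lambda>"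
  have \<Lambda>: "\<Lambda> \<ge> 16" using assms by simp
  have e: "0 < e" "e \<le> 1 / 16" using \<Lambda> by (auto simp: e_def)
  have L1: "L > 1" using assms(5,6) \<Lambda> by (simp add: field_simps)
  have "(L + m) / (L - 1) = (1 + m / L) / (1 - 1 / L)" using L1 by (simp add: field_simps)
  also have "\<dots> \<le> (1 + 2 * e) / (1 - e)"
  proof (rule frac_le)
    show "0 \<le> 1 + 2 * e" using e by simp
    show "1 + m / L \<le> 1 + 2 * e" using assms(4) by (simp add: e_def)
    show "0 < 1 - e" using e by simp
    show "1 - e \<le> 1 - 1 / L" using assms(5) by (simp add: e_def)
  qed
  also have "\<dots> \<le> 1 + 4 * e"
  proof -
    have "1 + 2 * e \<le> (1 + 4 * e) * (1 - e)" using e by (simp add: algebra_simps power2_eq_square)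
    then show ?thesis using e by (simp add: divide_le_eq)
  qed
  finally have r: "(L + m) / (L - 1) \<le> 1 + 4 * e" .
  have r0: "0 \<le> (L + m) / (L - 1)" using L1 assms by simp
  define f where "f = 4 * e"
  have f: "0 \<le> f" "real d * f \<le> 1/4" using e assms(1) \<Lambda> by (auto simp: f_def e_def field_simps)
  have "((L + m) / (L - 1)) ^ d \<le> (1 + f) ^ d" using r r0 by (intro power_mono) (auto simp: f_def)
  also have "\<dots> \<le> 1 + 2 * real d * f"
  proof -
    have "1 * f \<le> real d * f" by (rule mult_right_mono) (use assms f in auto)
    then have f1: "f \<le> 1" using f by linarith
    have b: "1 - real d * f \<le> (1 - f) ^ d" using Bernoulli_inequality[of "- f" d] f f1 by simp
    have "(1 + f) ^ d * (1 - f) ^ d = (1 - f\<^sup>2) ^ d" by (simp add: power_mult_distrib[symmetric] power2_eq_square algebra_simps)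
    also have "\<dots> \<le> 1"
    proof (rule power_le_one)
      have "f * f \<le> 1" using f f1 by (simp add: mult_le_one)
      then show "0 \<le> 1 - f\<^sup>2" by (simp add: power2_eq_square)
      show "1 - f\<^sup>2 \<le> 1" by simp
    qed
    finally have "(1 + f) ^ d * (1 - f) ^ d \<le> 1" .
    moreover have "(1 + f) ^ d * (1 - real d * f) \<le> (1 + f) ^ d * (1 - f) ^ d"
      using b f by (intro mult_left_mono) auto
    ultimately have "(1 + f) ^ d * (1 - real d * f) \<le> 1" by linarith
    moreover have "1 \<le> (1 + 2 * real d * f) * (1 - real d * f)"
    proof -
      have "0 \<le> real d * f * (1 - 2 * (real d * f))" using f by (intro mult_nonneg_nonneg) auto
      then show ?thesis by (simp add: algebra_simps)
    qed
    ultimately have "(1 + f) ^ d * (1 - real d * f) \<le> (1 + 2 * real d * f) * (1 - real d * f)" by linarith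
    moreover have "0 < 1 - real d * f" using f by simp
    ultimately show ?thesis by simp
  qed
  also have "\<dots> = 1 + 8 * real d / \<Lambda>" by (simp add: f_def e_def)
  finally show ?thesis .
qed

lemma ratio_lower:
  fixes L m \<Lambda> :: real and d :: nat
  assumes "\<Lambda> \<ge> 16 * real d" "d \<ge> 1" "m > 0" "m / L \<le> 2 / \<Lambda>" "L > 0"
  shows "1 - 8 * real d / \<Lambda> \<le> ((L - m) / L) ^ d"
proof -
  have \<Lambda>: "\<Lambda> \<ge> 16" using assms by simp
  have a: "m / L \<le> 1" using assms(4) \<Lambda> by (smt (verit) divide_le_eq_1)
  have "1 - 8 * real d / \<Lambda> \<le> 1 + real d * (- (m / L))"
  proof -
    have "real d * (m / L) \<le> real d * (2 / \<Lambda>)" by (rule mult_left_mono) (use assms(4) in auto)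
    also have "\<dots> \<le> 8 * real d / \<Lambda>" using \<Lambda> by (simp add: field_simps)
    finally show ?thesis by simp
  qed
  also have "\<dots> \<le> (1 + (- (m / L))) ^ d" using a by (intro Bernoulli_inequality) simp
  also have "\<dots> = ((L - m) / L) ^ d" using assms(5) by (simp add: field_simps)
  finally show ?thesis .
qed


lemma union_bound:
  assumes "finite I" "\<And>T. T \<in> I \<Longrightarrow> real (card {S\<in>\<Omega>. Q T S}) \<le> b" "finite \<Omega>"
  shows "real (card (\<Omega> \<inter> {S. \<exists>T\<in>I. Q T S})) \<le> real (card I) * b"
proof -
  have "\<Omega> \<inter> {S. \<exists>T\<in>I. Q T S} = (\<Union>T\<in>I. {S\<in>\<Omega>. Q T S})" by auto
  then have "card (\<Omega> \<inter> {S. \<exists>T\<in>I. Q T S}) \<le> (\<Sum>T\<in>I. card {S\<in>\<Omega>. Q T S})"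
    using card_UN_le[OF assms(1)] by simp
  then have "real (card (\<Omega> \<inter> {S. \<exists>T\<in>I. Q T S})) \<le> real (\<Sum>T\<in>I. card {S\<in>\<Omega>. Q T S})"
    by (rule of_nat_mono)
  then have "real (card (\<Omega> \<inter> {S. \<exists>T\<in>I. Q T S})) \<le> (\<Sum>T\<in>I. real (card {S\<in>\<Omega>. Q T S}))"
    by (simp add: of_nat_sum)
  also have "\<dots> \<le> (\<Sum>T\<in>I. b)" by (rule sum_mono) (rule assms(2))
  finally show ?thesis by simp
qed

lemma tiles_eq:
  "tiles k d = (\<lambda>p. {y. length y = d \<and> (\<forall>i<d. real (p ! i) / real k < y ! i \<and> y ! i \<le> (real (p ! i) + 1) / real k)})
      ` {p. length p = d \<and> (\<forall>i<d. p ! i < k)}"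
  unfolding tiles_def by auto

lemma card_tiles: "finite (tiles k d) \<and> card (tiles k d) \<le> k ^ d"
proof -
  have e: "{p. length p = d \<and> (\<forall>i<d. p ! i < k)} = {p. set p \<subseteq> {..<k} \<and> length p = d}"
    by (auto simp: subset_code(1) all_set_conv_all_nth)
  have "finite {p. length p = d \<and> (\<forall>i<d. p ! i < k)}" unfolding e by (simp add: finite_lists_length_eq)
  moreover have "card {p. length p = d \<and> (\<forall>i<d. p ! i < k)} = k ^ d" unfolding e by (simp add: card_lists_length_eq)
  ultimately show ?thesis unfolding tiles_eq using card_image_le finite_imageI by fastforce
qed

lemma grid_eq: "grid N d = {x. set x \<subseteq> {1..N} \<and> length x = d}"
  unfolding grid_def by (auto simp: subset_code(1) all_set_conv_all_nth)


theorem lemma8: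
  fixes d :: nat
  assumes "d \<ge> 1"
  shows "\<exists>\<Gamma>::real. \<Gamma> > 0 \<and>
    (\<forall>(n::nat) (m::nat) (C::real) (q::real).
      n \<ge> 2 \<and>
      real n / (2 * (log 2 (real n)) powr q) \<le> real m \<and>
      real m \<le> 2 * real n / (log 2 (real n)) powr q \<and>
      C \<ge> 1 + 2 ^ (d + 7) / log 2 (real n) \<and>
      (C powr (1 / real d) * real n / real m \<notin> \<int> \<longrightarrow> q \<ge> 1) \<and>
      (C powr (1 / real d) * real n / real m \<in> \<int> \<longrightarrow> q > 0)
      \<longrightarrow>
      (let N = nat \<lfloor>C powr (1 / real d) * real n\<rfloor>;
           L = C powr (1 / real d) * real n;
           P = uniform_subsets (grid N d) (n ^ d);
           B = \<Gamma> * real n powr \<Gamma> * 2 powr (- ((log 2 (real n)) powr (q * real d - 2) / \<Gamma>))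
       in measure_pmf.prob P {S. \<exists>T\<in>tiles m d.
              real (card {x\<in>S. map real x \<in> scale_set L T})
                \<le> (1 - \<Gamma> / log 2 (real n)) * real n ^ d / real m ^ d} \<le> B \<and>
          measure_pmf.prob P {S. \<exists>T\<in>tiles m d.
              real (card {x\<in>S. map real x \<in> scale_set L T})
                \<ge> (1 + \<Gamma> / log 2 (real n)) * real n ^ d / real m ^ d} \<le> B))"
proof -
  define \<Gamma> :: real where "\<Gamma> = 2 ^ (20 * (d * d))"
  have dd: "d \<le> d * d" by (simp add: le_square)
  have \<Gamma>1: "32 * 2 ^ d \<le> \<Gamma>"
  proof -
    have "(2::real) ^ (d + 5) \<le> 2 ^ (20 * (d * d))"
      by (rule power_increasing) (use dd assms in linarith)+
    then show ?thesis by (simp add: \<Gamma>_def power_add)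
  qed
  have \<Gamma>2: "16 * real d \<le> \<Gamma>"
  proof -
    have "16 * d < 16 * 2 ^ d" using less_exp[of d] by simp
    also have "\<dots> = 2 ^ (d + 4)" by (simp add: power_add)
    also have "\<dots> \<le> 2 ^ (20 * (d * d))" by (rule power_increasing) (use dd assms in linarith)+
    finally have "16 * d \<le> (2::nat) ^ (20 * (d * d))" by simp
    then have "real (16 * d) \<le> real ((2::nat) ^ (20 * (d * d)))" by (rule of_nat_mono)
    then show ?thesis by (simp add: \<Gamma>_def)
  qed
  have p2d: "(1::real) \<le> 2 ^ d" by simp
  have \<Gamma>3: "2 ^ d \<le> \<Gamma>" "real d \<le> \<Gamma>" "1 \<le> \<Gamma>" using \<Gamma>1 \<Gamma>2 p2d assms by linarith+
  have \<Gamma>4: "2 powr (real ((16 * d + 1) * d)) \<le> \<Gamma> ^ 2"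
  proof -
    have "(2::real) powr (real ((16 * d + 1) * d)) = 2 ^ ((16 * d + 1) * d)" by (rule powr_realpow) simp
    also have "\<dots> \<le> 2 ^ (2 * (20 * (d * d)))" by (rule power_increasing) (use dd in \<open>simp_all add: algebra_simps\<close>)
    also have "\<dots> = \<Gamma> ^ 2" by (simp add: \<Gamma>_def power_mult[symmetric] mult.commute)
    finally show ?thesis .
  qed
  have "\<Gamma> > 0" using \<Gamma>3 by simp
  moreover have "\<forall>(n::nat) (m::nat) (C::real) (q::real).
      n \<ge> 2 \<and>
      real n / (2 * (log 2 (real n)) powr q) \<le> real m \<and>
      real m \<le> 2 * real n / (log 2 (real n)) powr q \<and>
      C \<ge> 1 + 2 ^ (d + 7) / log 2 (real n) \<and>
      (C powr (1 / real d) * real n / real m \<notin> \<int> \<longrightarrow> q \<ge> 1) \<and>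
      (C powr (1 / real d) * real n / real m \<in> \<int> \<longrightarrow> q > 0)
      \<longrightarrow>
      (let N = nat \<lfloor>C powr (1 / real d) * real n\<rfloor>;
           L = C powr (1 / real d) * real n;
           P = uniform_subsets (grid N d) (n ^ d);
           B = \<Gamma> * real n powr \<Gamma> * 2 powr (- ((log 2 (real n)) powr (q * real d - 2) / \<Gamma>))
       in measure_pmf.prob P {S. \<exists>T\<in>tiles m d.
              real (card {x\<in>S. map real x \<in> scale_set L T})
                \<le> (1 - \<Gamma> / log 2 (real n)) * real n ^ d / real m ^ d} \<le> B \<and>
          measure_pmf.prob P {S. \<exists>T\<in>tiles m d.
              real (card {x\<in>S. map real x \<in> scale_set L T})
                \<ge> (1 + \<Gamma> / log 2 (real n)) * real n ^ d / real m ^ d} \<le> B)"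
  proof (intro allI impI)
    fix n m :: nat and C q :: real
    assume H: "n \<ge> 2 \<and>
      real n / (2 * (log 2 (real n)) powr q) \<le> real m \<and>
      real m \<le> 2 * real n / (log 2 (real n)) powr q \<and>
      C \<ge> 1 + 2 ^ (d + 7) / log 2 (real n) \<and>
      (C powr (1 / real d) * real n / real m \<notin> \<int> \<longrightarrow> q \<ge> 1) \<and>
      (C powr (1 / real d) * real n / real m \<in> \<int> \<longrightarrow> q > 0)"
    define \<Lambda> where "\<Lambda> = log 2 (real n)"
    define L where "L = C powr (1 / real d) * real n"
    define N where "N = nat \<lfloor>L\<rfloor>"
    define G where "G = grid N d"
    define s where "s = n ^ d"
    define \<Omega> where "\<Omega> = {S. S \<subseteq> G \<and> card S = s}"
    define P where "P = uniform_subsets G s"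
    define X where "X = \<Lambda> powr (q * real d - 2)"
    define B where "B = \<Gamma> * real n powr \<Gamma> * 2 powr (- (X / \<Gamma>))"
    define \<mu>0 where "\<mu>0 = real n ^ d / real m ^ d"
    define \<delta> where "\<delta> = \<Gamma> / \<Lambda>"
    define \<delta>' where "\<delta>' = min \<delta> 1"
    define \<Lambda>q where "\<Lambda>q = \<Lambda> powr q"
    define E1 where "E1 = {S. \<exists>T\<in>tiles m d. real (card {x\<in>S. map real x \<in> scale_set L T}) \<le> (1 - \<Gamma> / log 2 (real n)) * real n ^ d / real m ^ d}"
    define E2 where "E2 = {S. \<exists>T\<in>tiles m d. real (card {x\<in>S. map real x \<in> scale_set L T}) \<ge> (1 + \<Gamma> / log 2 (real n)) * real n ^ d / real m ^ d}"
    from H have n2: "n \<ge> 2" and m1: "real n / (2 * \<Lambda>q) \<le> real m" and m2: "real m \<le> 2 * real n / \<Lambda>q"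
      and Cb: "C \<ge> 1 + 2 ^ (d + 7) / \<Lambda>" and qi: "L / real m \<notin> \<int> \<longrightarrow> q \<ge> 1" and qz: "L / real m \<in> \<int> \<longrightarrow> q > 0"
      unfolding \<Lambda>_def \<Lambda>q_def L_def by auto
    have \<Lambda>1: "\<Lambda> \<ge> 1"
    proof -
      have "log 2 2 \<le> log 2 (real n)" by (rule log_mono) (use n2 in auto)
      then show ?thesis unfolding \<Lambda>_def by simp
    qed
    have n0: "real n > 0" using n2 by simp
    have n_eq: "real n = 2 powr \<Lambda>" unfolding \<Lambda>_def using n0 by simp
    have \<Lambda>n: "\<Lambda> \<le> real n"
    proof -
      have "real n < 2 ^ n" using less_exp[of n] by (metis of_nat_less_iff of_nat_numeral of_nat_power)
      then have "\<Lambda> < log 2 (2 ^ n)" unfolding \<Lambda>_def by (intro log_less) (use n2 in auto)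
      then show ?thesis by (simp add: log_nat_power)
    qed
    have q0: "q > 0" using qi qz by (cases "L / real m \<in> \<int>") auto
    have \<Lambda>q1: "\<Lambda>q \<ge> 1" unfolding \<Lambda>q_def using \<Lambda>1 q0 by (intro ge_one_powr_ge_zero) auto
    have m0: "real m > 0"
    proof -
      have "0 < real n / (2 * \<Lambda>q)" using n0 \<Lambda>q1 by simp
      then show ?thesis using m1 by linarith
    qed
    have mge1: "real m \<ge> 1" using m0 by simp
    have m\<Lambda>: "real m * \<Lambda>q \<le> 2 * real n" using m2 \<Lambda>q1 by (simp add: le_divide_eq)
    have m2n: "real m \<le> 2 * real n"
    proof -
      have "real m * 1 \<le> real m * \<Lambda>q" using m0 \<Lambda>q1 by (intro mult_left_mono) auto
      then show ?thesis using m\<Lambda> by simp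
    qed
    have C1: "C \<ge> 1"
    proof -
      have "0 \<le> 2 ^ (d + 7) / \<Lambda>" using \<Lambda>1 by simp
      then show ?thesis using Cb by linarith
    qed
    have c1: "C powr (1 / real d) \<ge> 1" by (rule ge_one_powr_ge_zero) (use C1 in simp_all)
    have Ln: "real n \<le> L"
    proof -
      have "1 * real n \<le> C powr (1 / real d) * real n" by (rule mult_right_mono) (use c1 in simp_all)
      then show ?thesis unfolding L_def by simp
    qed
    have L0: "L > 0" using Ln n0 by simp
    have rN: "real N = real_of_int \<lfloor>L\<rfloor>" unfolding N_def using L0 by simp
    have NL: "real N \<le> L" "L < real N + 1" unfolding rN by linarith+
    have nN: "n \<le> N"
    proof -
      have "int n \<le> \<lfloor>L\<rfloor>" using Ln by (simp add: le_floor_iff)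
      then show ?thesis unfolding N_def by simp
    qed
    have N0: "real N > 0" using nN n2 by simp
    have fG: "finite G" and cG: "card G = N ^ d" unfolding G_def grid_eq
      by (simp_all add: finite_lists_length_eq card_lists_length_eq)
    have M0: "0 < card G" unfolding cG using nN n2 by simp
    have sM: "s \<le> card G" unfolding s_def cG using nN by (simp add: power_mono)
    have fO: "finite \<Omega>" unfolding \<Omega>_def using fG by simp
    have cO: "card \<Omega> = card G choose s" unfolding \<Omega>_def using n_subsets[OF fG] by simp
    have O_ne: "\<Omega> \<noteq> {}"
    proof
      assume "\<Omega> = {}"
      then have "card G choose s = 0" using cO by simp
      then show False using sM by simp
    qed
    have cO0: "real (card \<Omega>) > 0" using O_ne fO by (simp add: card_gt_0_iff)
    have prob: "measure_pmf.prob P E = real (card (\<Omega> \<inter> E)) / real (card \<Omega>)" for E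
      unfolding P_def uniform_subsets_def \<Omega>_def[symmetric] using measure_pmf_of_set[OF O_ne fO] by simp
    have \<mu>0pos: "\<mu>0 > 0" unfolding \<mu>0_def using n0 m0 by simp
    have tl: "finite (tiles m d)" "card (tiles m d) \<le> m ^ d" using card_tiles by auto
    have \<delta>'01: "0 < \<delta>'" "\<delta>' \<le> 1" "\<delta>' \<le> \<delta>" unfolding \<delta>'_def \<delta>_def using \<Gamma>3 \<Lambda>1 by auto
    have \<Lambda>q\<Lambda>: "\<Lambda>q ^ d = \<Lambda> powr (q * real d)"
      unfolding \<Lambda>q_def using \<Lambda>1 by (simp add: powr_powr[symmetric] powr_realpow)
    have X0: "X \<ge> 0" unfolding X_def by simp
    have keyX: "X / 2 ^ d \<le> \<mu>0 * \<delta>'\<^sup>2"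
    proof -
      have a: "\<Lambda>q / 2 \<le> real n / real m" using m\<Lambda> m0 by (simp add: field_simps)
      have "(\<Lambda>q / 2) ^ d \<le> \<mu>0" unfolding \<mu>0_def power_divide[symmetric]
        by (rule power_mono[OF a]) (use \<Lambda>q1 in simp)
      moreover have "(1 / \<Lambda>)\<^sup>2 \<le> \<delta>'\<^sup>2"
      proof (rule power_mono)
        show "1 / \<Lambda> \<le> \<delta>'" unfolding \<delta>'_def \<delta>_def using \<Gamma>3 \<Lambda>1 by (auto simp: divide_right_mono)
      qed (use \<Lambda>1 in simp)
      ultimately have "(\<Lambda>q / 2) ^ d * (1 / \<Lambda>)\<^sup>2 \<le> \<mu>0 * \<delta>'\<^sup>2"
        by (intro mult_mono) (use \<Lambda>q1 \<mu>0pos in auto)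
      moreover have "(\<Lambda>q / 2) ^ d * (1 / \<Lambda>)\<^sup>2 = X / 2 ^ d"
      proof -
        have "X = \<Lambda> powr (q * real d) / \<Lambda> powr 2" unfolding X_def using \<Lambda>1 by (simp add: powr_diff)
        also have "\<dots> = \<Lambda>q ^ d / \<Lambda>\<^sup>2" using \<Lambda>1 by (simp add: \<Lambda>q\<Lambda>)
        finally show ?thesis by (simp add: power_divide)
      qed
      ultimately show ?thesis by simp
    qed
    have final: "real (m ^ d) * exp (- (\<mu>0 * \<delta>'\<^sup>2 / 32)) \<le> B"
    proof -
      have "real m ^ d \<le> (2 * real n) ^ d" by (rule power_mono[OF m2n]) simp
      then have "real (m ^ d) \<le> (2 * real n) ^ d" by simp
      also have "\<dots> = 2 ^ d * real n powr real d" using n0 by (simp add: power_mult_distrib powr_realpow)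
      also have "\<dots> \<le> \<Gamma> * real n powr \<Gamma>"
        by (intro mult_mono powr_mono) (use \<Gamma>3 n2 in auto)
      finally have A1: "real (m ^ d) \<le> \<Gamma> * real n powr \<Gamma>" .
      have "X / \<Gamma> \<le> X / (32 * 2 ^ d)" using \<Gamma>1 \<Gamma>3 X0 by (intro divide_left_mono) auto
      also have "\<dots> = (X / 2 ^ d) / 32" by simp
      also have "\<dots> \<le> \<mu>0 * \<delta>'\<^sup>2 / 32" by (rule divide_right_mono[OF keyX]) simp
      finally have "exp (- (\<mu>0 * \<delta>'\<^sup>2 / 32)) \<le> exp (- (X / \<Gamma>))" by simp
      also have "\<dots> \<le> exp (- (X / \<Gamma>) * ln 2)"
      proof -
        have "ln (2::real) \<le> 1" using ln_2_less_1 by simp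
        moreover have "0 \<le> X / \<Gamma>" using X0 \<Gamma>3 by simp
        ultimately have "X / \<Gamma> * ln 2 \<le> X / \<Gamma>" by (intro mult_left_le)
        then have "- (X / \<Gamma>) \<le> - (X / \<Gamma>) * ln 2" by linarith
        then show ?thesis by simp
      qed
      also have "\<dots> = 2 powr (- (X / \<Gamma>))" by (simp add: powr_def)
      finally have A2: "exp (- (\<mu>0 * \<delta>'\<^sup>2 / 32)) \<le> 2 powr (- (X / \<Gamma>))" .
      have "real (m ^ d) * exp (- (\<mu>0 * \<delta>'\<^sup>2 / 32)) \<le> \<Gamma> * real n powr \<Gamma> * 2 powr (- (X / \<Gamma>))"
        by (rule mult_mono[OF A1 A2]) (use \<Gamma>3 in auto)
      then show ?thesis unfolding B_def .
    qed
    have core: "measure_pmf.prob P E1 \<le> B \<and> measure_pmf.prob P E2 \<le> B"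
      if eps: "0 \<le> \<epsilon>" "\<epsilon> \<le> \<delta>' / 2"
        and means: "\<And>T. T \<in> tiles m d \<Longrightarrow>
           (1 - \<epsilon>) * \<mu>0 \<le> real s / real (card G) * real (card {x\<in>G. map real x \<in> scale_set L T}) \<and>
           real s / real (card G) * real (card {x\<in>G. map real x \<in> scale_set L T}) \<le> (1 + \<epsilon>) * \<mu>0"
      for \<epsilon>
    proof -
      define b where "b = real (card \<Omega>) * exp (- (\<mu>0 * \<delta>'\<^sup>2 / 32))"
      have inter: "{x\<in>S. map real x \<in> scale_set L T} = S \<inter> {x\<in>G. map real x \<in> scale_set L T}" if "S \<in> \<Omega>" for S T
        using that unfolding \<Omega>_def by auto
      have e1: "(1 - \<Gamma> / log 2 (real n)) * real n ^ d / real m ^ d = (1 - \<delta>) * \<mu>0"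
        unfolding \<mu>0_def \<delta>_def \<Lambda>_def by simp
      have e2: "(1 + \<Gamma> / log 2 (real n)) * real n ^ d / real m ^ d = (1 + \<delta>) * \<mu>0"
        unfolding \<mu>0_def \<delta>_def \<Lambda>_def by simp
      have "(1 - \<delta>) * \<mu>0 \<le> (1 - \<delta>') * \<mu>0" by (rule mult_right_mono) (use \<delta>'01 \<mu>0pos in auto)
      then have thr1: "(1 - \<Gamma> / log 2 (real n)) * real n ^ d / real m ^ d \<le> (1 - \<delta>') * \<mu>0"
        unfolding e1 .
      have "(1 + \<delta>') * \<mu>0 \<le> (1 + \<delta>) * \<mu>0" by (rule mult_right_mono) (use \<delta>'01 \<mu>0pos in auto)
      then have thr2: "(1 + \<delta>') * \<mu>0 \<le> (1 + \<Gamma> / log 2 (real n)) * real n ^ d / real m ^ d"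
        unfolding e2 .
      have b1: "real (card {S\<in>\<Omega>. real (card {x\<in>S. map real x \<in> scale_set L T}) \<le> (1 - \<Gamma> / log 2 (real n)) * real n ^ d / real m ^ d}) \<le> b"
        if T: "T \<in> tiles m d" for T
      proof -
        define A where "A = {x\<in>G. map real x \<in> scale_set L T}"
        have AG: "A \<subseteq> G" unfolding A_def by auto
        have "{S\<in>\<Omega>. real (card {x\<in>S. map real x \<in> scale_set L T}) \<le> (1 - \<Gamma> / log 2 (real n)) * real n ^ d / real m ^ d}
            \<subseteq> {S\<in>\<Omega>. real (card (S \<inter> A)) \<le> (1 - \<delta>') * \<mu>0}"
        proof (rule subsetI)
          fix S assume "S \<in> {S\<in>\<Omega>. real (card {x\<in>S. map real x \<in> scale_set L T}) \<le> (1 - \<Gamma> / log 2 (real n)) * real n ^ d / real m ^ d}"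
          then have S: "S \<in> \<Omega>" and c: "real (card {x\<in>S. map real x \<in> scale_set L T}) \<le> (1 - \<Gamma> / log 2 (real n)) * real n ^ d / real m ^ d"
            by auto
          have eq: "{x\<in>S. map real x \<in> scale_set L T} = S \<inter> A" using inter[OF S] unfolding A_def .
          have "real (card (S \<inter> A)) \<le> (1 - \<delta>') * \<mu>0" using c thr1 unfolding eq by linarith
          then show "S \<in> {S\<in>\<Omega>. real (card (S \<inter> A)) \<le> (1 - \<delta>') * \<mu>0}" using S by simp
        qed
        then have "card {S\<in>\<Omega>. real (card {x\<in>S. map real x \<in> scale_set L T}) \<le> (1 - \<Gamma> / log 2 (real n)) * real n ^ d / real m ^ d}
            \<le> card {S\<in>\<Omega>. real (card (S \<inter> A)) \<le> (1 - \<delta>') * \<mu>0}"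
          by (rule card_mono[rotated]) (use fO in simp)
        moreover have "real (card {S\<in>\<Omega>. real (card (S \<inter> A)) \<le> (1 - \<delta>') * \<mu>0}) \<le> b"
          unfolding b_def \<Omega>_def
          by (rule tile_lower[OF fG AG sM M0 \<mu>0pos \<delta>'01(1,2) eps(2)]) (use means[OF T] in \<open>simp add: A_def\<close>)
        ultimately show ?thesis by linarith
      qed
      have b2: "real (card {S\<in>\<Omega>. real (card {x\<in>S. map real x \<in> scale_set L T}) \<ge> (1 + \<Gamma> / log 2 (real n)) * real n ^ d / real m ^ d}) \<le> b"
        if T: "T \<in> tiles m d" for T
      proof -
        define A where "A = {x\<in>G. map real x \<in> scale_set L T}"
        have AG: "A \<subseteq> G" unfolding A_def by auto
        have "{S\<in>\<Omega>. real (card {x\<in>S. map real x \<in> scale_set L T}) \<ge> (1 + \<Gamma> / log 2 (real n)) * real n ^ d / real m ^ d}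
            \<subseteq> {S\<in>\<Omega>. (1 + \<delta>') * \<mu>0 \<le> real (card (S \<inter> A))}"
        proof (rule subsetI)
          fix S assume "S \<in> {S\<in>\<Omega>. real (card {x\<in>S. map real x \<in> scale_set L T}) \<ge> (1 + \<Gamma> / log 2 (real n)) * real n ^ d / real m ^ d}"
          then have S: "S \<in> \<Omega>" and c: "real (card {x\<in>S. map real x \<in> scale_set L T}) \<ge> (1 + \<Gamma> / log 2 (real n)) * real n ^ d / real m ^ d"
            by auto
          have eq: "{x\<in>S. map real x \<in> scale_set L T} = S \<inter> A" using inter[OF S] unfolding A_def .
          have "(1 + \<delta>') * \<mu>0 \<le> real (card (S \<inter> A))" using c thr2 unfolding eq by linarith
          then show "S \<in> {S\<in>\<Omega>. (1 + \<delta>') * \<mu>0 \<le> real (card (S \<inter> A))}" using S by simp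
        qed
        then have "card {S\<in>\<Omega>. real (card {x\<in>S. map real x \<in> scale_set L T}) \<ge> (1 + \<Gamma> / log 2 (real n)) * real n ^ d / real m ^ d}
            \<le> card {S\<in>\<Omega>. (1 + \<delta>') * \<mu>0 \<le> real (card (S \<inter> A))}"
          by (rule card_mono[rotated]) (use fO in simp)
        moreover have "real (card {S\<in>\<Omega>. (1 + \<delta>') * \<mu>0 \<le> real (card (S \<inter> A))}) \<le> b"
          unfolding b_def \<Omega>_def
          by (rule tile_upper[OF fG AG sM M0 \<mu>0pos \<delta>'01(1,2) eps(2)]) (use means[OF T] in \<open>simp add: A_def\<close>)
        ultimately show ?thesis by linarith
      qed
      have u1: "real (card (\<Omega> \<inter> E1)) \<le> real (card (tiles m d)) * b"
        unfolding E1_def by (rule union_bound[OF tl(1) b1 fO])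
      have u2: "real (card (\<Omega> \<inter> E2)) \<le> real (card (tiles m d)) * b"
        unfolding E2_def by (rule union_bound[OF tl(1) b2 fO])
      have tb: "real (card (tiles m d)) * b \<le> real (m ^ d) * exp (- (\<mu>0 * \<delta>'\<^sup>2 / 32)) * real (card \<Omega>)"
      proof -
        have "real (card (tiles m d)) \<le> real (m ^ d)" by (rule of_nat_mono[OF tl(2)])
        then have "real (card (tiles m d)) * b \<le> real (m ^ d) * b" by (rule mult_right_mono) (simp add: b_def)
        then show ?thesis by (simp add: b_def mult_ac)
      qed
      have fin2: "real (m ^ d) * exp (- (\<mu>0 * \<delta>'\<^sup>2 / 32)) * real (card \<Omega>) \<le> B * real (card \<Omega>)"
        by (rule mult_right_mono[OF final]) simp
      have "real (card (\<Omega> \<inter> E)) / real (card \<Omega>) \<le> B"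
        if "real (card (\<Omega> \<inter> E)) \<le> real (card (tiles m d)) * b" for E
      proof -
        have "real (card (\<Omega> \<inter> E)) \<le> B * real (card \<Omega>)" using that tb fin2 by linarith
        then show ?thesis using cO0 by (simp add: divide_le_eq)
      qed
      then show ?thesis unfolding prob using u1 u2 by blast
    qed
    have probs: "measure_pmf.prob P E1 \<le> B \<and> measure_pmf.prob P E2 \<le> B"
    proof (cases "L / real m \<in> \<int>")
      case True
      show ?thesis
      proof (rule core[of 0])
        show "0 \<le> (0::real)" by simp
        show "0 \<le> \<delta>' / 2" using \<delta>'01 by simp
        fix T assume T: "T \<in> tiles m d"
        then obtain p where p: "length p = d" "\<forall>i<d. p ! i < m"
          and Tp: "T = {y. length y = d \<and> (\<forall>i<d. real (p ! i) / real m < y ! i \<and> y ! i \<le> (real (p ! i) + 1) / real m)}"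
          unfolding tiles_def by auto
        have m0': "m > 0" using m0 by simp
        have cA: "real (card {x\<in>G. map real x \<in> scale_set L T}) = (L / real m) ^ d"
          unfolding G_def N_def Tp by (rule tile_card_bounds(3)[OF L0 m0' p True])
        have LZ: "L \<in> \<int>"
        proof -
          have "L = L / real m * real m" using m0 by simp
          moreover have "L / real m * real m \<in> \<int>" using True by (intro Ints_mult) auto
          ultimately show ?thesis by simp
        qed
        then obtain z where z: "L = real_of_int z" by (rule Ints_cases)
        have NLe: "real N = L" unfolding rN z by simp
        have "real s / real (card G) * real (card {x\<in>G. map real x \<in> scale_set L T}) = \<mu>0"
        proof -
          have "real s / real (card G) * real (card {x\<in>G. map real x \<in> scale_set L T})
              = real n ^ d / L ^ d * (L / real m) ^ d" unfolding cA s_def cG using NLe by simp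
          also have "\<dots> = \<mu>0" unfolding \<mu>0_def using L0 m0 by (simp add: power_divide)
          finally show ?thesis .
        qed
        then show "(1 - 0) * \<mu>0 \<le> real s / real (card G) * real (card {x\<in>G. map real x \<in> scale_set L T}) \<and>
           real s / real (card G) * real (card {x\<in>G. map real x \<in> scale_set L T}) \<le> (1 + 0) * \<mu>0" by simp
      qed
    next
      case False
      then have q1: "q \<ge> 1" using qi by simp
      show ?thesis
      proof (cases "\<Lambda> \<ge> 16 * real d")
        case True
        define \<epsilon> where "\<epsilon> = 8 * real d / \<Lambda>"
        have "\<Lambda> powr 1 \<le> \<Lambda> powr q" by (rule powr_mono) (use q1 \<Lambda>1 in auto)
        then have \<Lambda>\<Lambda>q: "\<Lambda> \<le> \<Lambda>q" unfolding \<Lambda>q_def using \<Lambda>1 by simp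
        have mL: "real m / L \<le> 2 / \<Lambda>"
        proof -
          have "real m / L \<le> real m / real n" by (rule divide_left_mono) (use Ln n0 m0 L0 in auto)
          also have "\<dots> \<le> 2 / \<Lambda>q" using m\<Lambda> n0 \<Lambda>q1 by (simp add: field_simps)
          also have "\<dots> \<le> 2 / \<Lambda>" by (rule divide_left_mono) (use \<Lambda>\<Lambda>q \<Lambda>1 in auto)
          finally show ?thesis .
        qed
        have iL: "1 / L \<le> 1 / \<Lambda>" by (rule divide_left_mono) (use \<Lambda>n Ln \<Lambda>1 in auto)
        have \<Lambda>16: "\<Lambda> \<ge> 16" using True assms by simp
        have "real m / L \<le> 1"
        proof -
          have "2 / \<Lambda> \<le> 1" using \<Lambda>16 by simp
          then show ?thesis using mL by linarith
        qed
        then have Lm1: "1 \<le> L / real m" using L0 m0 by (simp add: field_simps)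
        have e0: "0 \<le> \<epsilon>" unfolding \<epsilon>_def using \<Lambda>1 by simp
        have eA: "\<epsilon> \<le> (\<Gamma> / \<Lambda>) / 2"
          unfolding \<epsilon>_def using \<Gamma>2 \<Lambda>1 by (simp add: field_simps)
        have eB: "\<epsilon> \<le> 1 / 2"
          unfolding \<epsilon>_def using True \<Lambda>1 by (simp add: field_simps)
        have e\<delta>: "\<epsilon> \<le> \<delta>' / 2" unfolding \<delta>'_def \<delta>_def using eA eB by (auto simp: min_def)
        have L1: "L - 1 > 0" using Ln n2 by simp
        have NL1: "L - 1 \<le> real N" using NL by simp
        show ?thesis
        proof (rule core[OF e0 e\<delta>])
          fix T assume T: "T \<in> tiles m d"
          then obtain p where p: "length p = d" "\<forall>i<d. p ! i < m"
            and Tp: "T = {y. length y = d \<and> (\<forall>i<d. real (p ! i) / real m < y ! i \<and> y ! i \<le> (real (p ! i) + 1) / real m)}"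
            unfolding tiles_def by auto
          have m0': "m > 0" using m0 by simp
          define A where "A = {x\<in>G. map real x \<in> scale_set L T}"
          have cAu: "real (card A) \<le> (L / real m + 1) ^ d"
            unfolding A_def G_def N_def Tp by (rule tile_card_bounds(1)[OF L0 m0' p])
          have cAl: "(L / real m - 1) ^ d \<le> real (card A)"
            unfolding A_def G_def N_def Tp by (rule tile_card_bounds(2)[OF L0 m0' p Lm1])
          have sG: "real s / real (card G) = real n ^ d / real N ^ d" by (simp add: s_def cG)
          have up: "real n ^ d / real N ^ d * real (card A) \<le> (1 + \<epsilon>) * \<mu>0"
          proof -
            have "real n ^ d / real N ^ d * real (card A) \<le> real n ^ d / real N ^ d * (L / real m + 1) ^ d"
              by (rule mult_left_mono[OF cAu]) simp
            also have "\<dots> = (real n / real N * (L / real m + 1)) ^ d" by (simp add: power_mult_distrib power_divide)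
            also have "real n / real N * (L / real m + 1) = real n / real m * ((L + real m) / real N)"
              using m0 N0 by (simp add: field_simps)
            also have "(real n / real m * ((L + real m) / real N)) ^ d = \<mu>0 * ((L + real m) / real N) ^ d"
              unfolding \<mu>0_def by (simp add: power_mult_distrib power_divide)
            also have "\<dots> \<le> \<mu>0 * ((L + real m) / (L - 1)) ^ d"
            proof (rule mult_left_mono[OF power_mono])
              show "(L + real m) / real N \<le> (L + real m) / (L - 1)"
                by (rule divide_left_mono) (use NL1 L1 L0 m0 N0 in auto)
            qed (use L0 m0 N0 \<mu>0pos in auto)
            also have "\<dots> \<le> \<mu>0 * (1 + \<epsilon>)"
              unfolding \<epsilon>_def by (rule mult_left_mono[OF ratio_upper[OF True assms m0 mL iL L0]]) (use \<mu>0pos in simp)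
            finally show ?thesis by (simp add: mult.commute)
          qed
          have lo: "(1 - \<epsilon>) * \<mu>0 \<le> real n ^ d / real N ^ d * real (card A)"
          proof -
            have "\<mu>0 * (1 - \<epsilon>) \<le> \<mu>0 * ((L - real m) / L) ^ d"
              unfolding \<epsilon>_def by (rule mult_left_mono[OF ratio_lower[OF True assms m0 mL L0]]) (use \<mu>0pos in simp)
            also have "\<mu>0 * ((L - real m) / L) ^ d = (real n / real m * ((L - real m) / L)) ^ d"
              unfolding \<mu>0_def by (simp add: power_mult_distrib power_divide)
            also have "real n / real m * ((L - real m) / L) = real n / L * (L / real m - 1)"
              using m0 L0 by (simp add: field_simps)
            also have "(real n / L * (L / real m - 1)) ^ d = real n ^ d / L ^ d * (L / real m - 1) ^ d"
              by (simp add: power_mult_distrib power_divide)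
            also have "\<dots> \<le> real n ^ d / real N ^ d * (L / real m - 1) ^ d"
            proof (rule mult_right_mono)
              show "real n ^ d / L ^ d \<le> real n ^ d / real N ^ d"
                by (rule divide_left_mono) (use NL N0 L0 in \<open>auto intro: power_mono\<close>)
            qed (use Lm1 in simp)
            also have "\<dots> \<le> real n ^ d / real N ^ d * real (card A)"
              by (rule mult_left_mono[OF cAl]) simp
            finally show ?thesis by (simp add: mult.commute)
          qed
          show "(1 - \<epsilon>) * \<mu>0 \<le> real s / real (card G) * real (card {x\<in>G. map real x \<in> scale_set L T}) \<and>
             real s / real (card G) * real (card {x\<in>G. map real x \<in> scale_set L T}) \<le> (1 + \<epsilon>) * \<mu>0"
            using up lo unfolding sG A_def by simp
        qed
      next
        case False
        have \<Lambda>qn: "\<Lambda>q \<le> 2 * real n"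
        proof -
          have "1 * \<Lambda>q \<le> real m * \<Lambda>q" by (rule mult_right_mono) (use mge1 \<Lambda>q1 in auto)
          then show ?thesis using m\<Lambda> by simp
        qed
        have "X \<le> \<Lambda> powr (q * real d)" unfolding X_def by (rule powr_mono) (use \<Lambda>1 in auto)
        also have "\<dots> = \<Lambda>q ^ d" using \<Lambda>q\<Lambda> by simp
        also have "\<dots> \<le> (2 * real n) ^ d" by (rule power_mono[OF \<Lambda>qn]) (use \<Lambda>q1 in simp)
        also have "2 * real n = 2 powr (\<Lambda> + 1)" unfolding n_eq by (simp add: powr_add)
        also have "(2 powr (\<Lambda> + 1)) ^ d = 2 powr ((\<Lambda> + 1) * real d)"
          by (simp add: powr_powr[symmetric] powr_realpow)
        also have "\<dots> \<le> 2 powr (real ((16 * d + 1) * d))"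
        proof (rule powr_mono)
          have "(\<Lambda> + 1) * real d \<le> (16 * real d + 1) * real d"
            by (rule mult_right_mono) (use False in auto)
          moreover have "(16 * real d + 1) * real d = real ((16 * d + 1) * d)" by (simp add: algebra_simps)
          ultimately show "(\<Lambda> + 1) * real d \<le> real ((16 * d + 1) * d)" by linarith
        qed simp
        also have "\<dots> \<le> \<Gamma> ^ 2" by (rule \<Gamma>4)
        also have "\<dots> \<le> \<Gamma> ^ 2 * \<Lambda>" using \<Lambda>1 by (simp add: mult_le_cancel_left1)
        finally have XG: "X \<le> \<Gamma> ^ 2 * \<Lambda>" .
        have "X / \<Gamma> \<le> \<Gamma> * \<Lambda>" using XG \<Gamma>3 by (simp add: divide_le_eq power2_eq_square mult_ac)
        then have "2 powr (- (\<Gamma> * \<Lambda>)) \<le> 2 powr (- (X / \<Gamma>))" by (intro powr_mono) auto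
        moreover have "2 powr (- (\<Gamma> * \<Lambda>)) = real n powr (- \<Gamma>)"
          unfolding n_eq by (simp add: powr_powr mult.commute)
        ultimately have "real n powr (- \<Gamma>) \<le> 2 powr (- (X / \<Gamma>))" by simp
        then have "\<Gamma> * real n powr \<Gamma> * real n powr (- \<Gamma>) \<le> \<Gamma> * real n powr \<Gamma> * 2 powr (- (X / \<Gamma>))"
          by (rule mult_left_mono) (use \<Gamma>3 in simp)
        moreover have "\<Gamma> * real n powr \<Gamma> * real n powr (- \<Gamma>) = \<Gamma>"
          using n0 by (simp add: mult.assoc powr_add[symmetric])
        ultimately have B1: "1 \<le> B" unfolding B_def using \<Gamma>3 by linarith
        have "measure_pmf.prob P E1 \<le> 1" "measure_pmf.prob P E2 \<le> 1" by (rule measure_pmf.prob_le_1)+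
        then show ?thesis using B1 by linarith
      qed
    qed
    show "let N = nat \<lfloor>C powr (1 / real d) * real n\<rfloor>;
           L = C powr (1 / real d) * real n;
           P = uniform_subsets (grid N d) (n ^ d);
           B = \<Gamma> * real n powr \<Gamma> * 2 powr (- ((log 2 (real n)) powr (q * real d - 2) / \<Gamma>))
       in measure_pmf.prob P {S. \<exists>T\<in>tiles m d.
              real (card {x\<in>S. map real x \<in> scale_set L T})
                \<le> (1 - \<Gamma> / log 2 (real n)) * real n ^ d / real m ^ d} \<le> B \<and>
          measure_pmf.prob P {S. \<exists>T\<in>tiles m d.
              real (card {x\<in>S. map real x \<in> scale_set L T})
                \<ge> (1 + \<Gamma> / log 2 (real n)) * real n ^ d / real m ^ d} \<le> B"
      using probs unfolding Let_def E1_def E2_def P_def B_def X_def \<Lambda>_def G_def N_def L_def s_def .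
  qed
  ultimately show ?thesis by blast
qed

end
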